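(* For every integer $k\ge 1$, let $G_k$ be the graph consisting of a path $u_1u_2\cdots u_{2^k-1}$ together with an independent set $\{v_0,\dots,v_{k-1}\}$ disjoint from the path, where $v_i$ is adjacent to $u_j$ if and only if $i$ is the largest integer such that $2^i$ divides $j$ (and there are no other edges). Then $G_k$ has $2^k+k-1$ vertices, is $\mathcal{O}_2$-free, does not contain $K_{3,3}$ as a subgraph, and has treewidth exactly $k$.
   Context: All graphs are finite and simple. Two vertex-disjoint subgraphs are independent if there is no edge between them. A graph is $\mathcal{O}_2$-free if it does not contain two vertex-disjoint cycles with no edge between them; equivalently, it has no induced subgraph that is a disjoint union of two cycles. *)

theory Defs
  imports Main
begin

type_synonym 'a graph = "'a set \<times> 'a set set"

definition verts :: "'a graph \<Rightarrow> 'a set" where "verts G = fst G"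
definition edges :: "'a graph \<Rightarrow> 'a set set" where "edges G = snd G"

definition simple_graph :: "'a graph \<Rightarrow> bool" where
  "simple_graph G \<longleftrightarrow> finite (verts G) \<and>
     (\<forall>e\<in>edges G. \<exists>x y. x \<noteq> y \<and> x \<in> verts G \<and> y \<in> verts G \<and> e = {x, y})"

definition is_cycle :: "'a graph \<Rightarrow> 'a list \<Rightarrow> bool" where
  "is_cycle G xs \<longleftrightarrow> length xs \<ge> 3 \<and> distinct xs \<and> set xs \<subseteq> verts G \<and>
     (\<forall>i < length xs. {xs ! i, xs ! ((i + 1) mod length xs)} \<in> edges G)"

definition independent_sets :: "'a graph \<Rightarrow> 'a set \<Rightarrow> 'a set \<Rightarrow> bool" where
  "independent_sets G A B \<longleftrightarrow> A \<inter> B = {} \<and> (\<forall>a\<in>A. \<forall>b\<in>B. {a, b} \<notin> edges G)"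

definition O2_free :: "'a graph \<Rightarrow> bool" where
  "O2_free G \<longleftrightarrow> \<not> (\<exists>xs ys. is_cycle G xs \<and> is_cycle G ys \<and> independent_sets G (set xs) (set ys))"

definition has_K33_subgraph :: "'a graph \<Rightarrow> bool" where
  "has_K33_subgraph G \<longleftrightarrow> (\<exists>a1 a2 a3 b1 b2 b3.
     distinct [a1, a2, a3, b1, b2, b3] \<and> {a1,a2,a3,b1,b2,b3} \<subseteq> verts G \<and>
     (\<forall>a\<in>{a1,a2,a3}. \<forall>b\<in>{b1,b2,b3}. {a, b} \<in> edges G))"

definition connected_in :: "'a graph \<Rightarrow> 'a set \<Rightarrow> bool" where
  "connected_in G S \<longleftrightarrow> S \<subseteq> verts G \<and>
     (\<forall>x\<in>S. \<forall>y\<in>S. (\<lambda>u v. u \<in> S \<and> v \<in> S \<and> {u, v} \<in> edges G)\<^sup>*\<^sup>* x y)"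

definition is_tree :: "'b graph \<Rightarrow> bool" where
  "is_tree T \<longleftrightarrow> simple_graph T \<and> verts T \<noteq> {} \<and> connected_in T (verts T) \<and>
     \<not> (\<exists>xs. is_cycle T xs)"

definition tree_decomposition :: "'a graph \<Rightarrow> nat graph \<Rightarrow> (nat \<Rightarrow> 'a set) \<Rightarrow> bool" where
  "tree_decomposition G T B \<longleftrightarrow> is_tree T \<and>
     (\<forall>t\<in>verts T. B t \<subseteq> verts G) \<and>
     (\<forall>v\<in>verts G. \<exists>t\<in>verts T. v \<in> B t) \<and>
     (\<forall>e\<in>edges G. \<exists>t\<in>verts T. e \<subseteq> B t) \<and>
     (\<forall>v\<in>verts G. connected_in T {t \<in> verts T. v \<in> B t})"

definition treewidth :: "'a graph \<Rightarrow> nat" where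
  "treewidth G = (LEAST w. \<exists>T B. tree_decomposition G T B \<and>
                      (\<forall>t\<in>verts T. card (B t) \<le> w + 1))"

text \<open>The graph G_k: Inl j is u_j (1 \<le> j \<le> 2^k-1), Inr i is v_i (i < k).\<close>
definition Gk :: "nat \<Rightarrow> (nat + nat) graph" where
  "Gk k = (Inl ` {1 .. 2^k - 1} \<union> Inr ` {..<k},
           {{Inl j, Inl (j + 1)} | j. 1 \<le> j \<and> j + 1 \<le> 2^k - 1} \<union>
           {{Inr i, Inl j} | i j. i < k \<and> 1 \<le> j \<and> j \<le> 2^k - 1 \<and>
               i = (GREATEST i. 2^i dvd j)})"

end

theory Submission
  imports Defs
begin


definition nu :: "nat \<Rightarrow> nat" where "nu j = (GREATEST i. 2^i dvd j)"

lemma nu_dvd_iff: assumes "j \<ge> 1" shows "2^i dvd j \<longleftrightarrow> i \<le> nu j"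
proof
  have b: "\<And>y. 2^y dvd j \<Longrightarrow> y \<le> j"
  proof -
    fix y assume "2^y dvd (j::nat)"
    then have "2^y \<le> j" using assms by (simp add: dvd_imp_le)
    moreover have "y < 2^y" by (rule less_exp)
    ultimately show "y \<le> j" by linarith
  qed
  assume "2^i dvd j" then show "i \<le> nu j" unfolding nu_def using Greatest_le_nat[of "\<lambda>i. 2^i dvd j" i j] b by blast
next
  have b: "\<And>y. 2^y dvd j \<Longrightarrow> y \<le> j"
  proof -
    fix y assume "2^y dvd (j::nat)"
    then have "2^y \<le> j" using assms by (simp add: dvd_imp_le)
    moreover have "y < 2^y" by (rule less_exp)
    ultimately show "y \<le> j" by linarith
  qed
  have "2^(nu j) dvd j" unfolding nu_def using GreatestI_nat[of "\<lambda>i. 2^i dvd j" 0 j] b by simp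
  moreover assume "i \<le> nu j"
  ultimately show "2^i dvd j" by (meson dvd_trans le_imp_power_dvd)
qed

lemma nu_eq_iff: assumes "j \<ge> 1" shows "nu j = i \<longleftrightarrow> 2^i dvd j \<and> \<not> 2^(Suc i) dvd j"
  using nu_dvd_iff[OF assms, of i] nu_dvd_iff[OF assms, of "Suc i"] by auto

lemma nu_less: assumes "1 \<le> j" "j \<le> 2^k - 1" shows "nu j < k"
proof (rule ccontr)
  assume "\<not> nu j < k" then have "2^k dvd j" using nu_dvd_iff[OF assms(1)] by simp
  then have "2^k \<le> j" using assms(1) dvd_imp_le by auto
  moreover have "(0::nat) < 2^k" by simp
  ultimately show False using assms(2) by arith
qed

lemma Gk_verts: "verts (Gk k) = Inl ` {1 .. 2^k - 1} \<union> Inr ` {..<k}"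
  by (simp add: Gk_def verts_def)

lemma Gk_edges: "edges (Gk k) = {{Inl j, Inl (j + 1)} | j. 1 \<le> j \<and> j + 1 \<le> 2^k - 1} \<union>
           {{Inr i, Inl j} | i j. i < k \<and> 1 \<le> j \<and> j \<le> 2^k - 1 \<and> i = nu j}"
  by (simp add: Gk_def edges_def nu_def)

lemma Inl_in_verts[simp]: "Inl j \<in> verts (Gk k) \<longleftrightarrow> 1 \<le> j \<and> j \<le> 2^k - 1"
  by (auto simp: Gk_verts)
lemma Inr_in_verts[simp]: "Inr i \<in> verts (Gk k) \<longleftrightarrow> i < k"
  by (auto simp: Gk_verts)

lemma edge_LL: "{Inl a, Inl b} \<in> edges (Gk k) \<longleftrightarrow> (1 \<le> a \<and> b = a + 1 \<and> b \<le> 2^k - 1) \<or> (1 \<le> b \<and> a = b + 1 \<and> a \<le> 2^k - 1)"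
  by (auto simp: Gk_edges doubleton_eq_iff)

lemma edge_RR: "{Inr a, Inr b} \<notin> edges (Gk k)"
  by (auto simp: Gk_edges doubleton_eq_iff)

lemma edge_RL: "{Inr i, Inl j} \<in> edges (Gk k) \<longleftrightarrow> i < k \<and> 1 \<le> j \<and> j \<le> 2^k - 1 \<and> i = nu j"
  by (auto simp: Gk_edges doubleton_eq_iff)

lemma edge_LR: "{Inl j, Inr i} \<in> edges (Gk k) \<longleftrightarrow> i < k \<and> 1 \<le> j \<and> j \<le> 2^k - 1 \<and> i = nu j"
  using edge_RL by (metis insert_commute)

lemma nbr_Inl: assumes "{Inl e, y} \<in> edges (Gk k)"
  shows "y = Inl (e+1) \<or> (y = Inl (e - 1) \<and> e \<ge> 2) \<or> y = Inr (nu e)"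
proof (cases y)
  case (Inl b) then show ?thesis using assms edge_LL by fastforce
next
  case (Inr b) then show ?thesis using assms edge_LR by fastforce
qed

lemma simple_Gk: "simple_graph (Gk k)"
  unfolding simple_graph_def
proof
  show "finite (verts (Gk k))" by (simp add: Gk_verts)
  show "\<forall>e\<in>edges (Gk k). \<exists>x y. x \<noteq> y \<and> x \<in> verts (Gk k) \<and> y \<in> verts (Gk k) \<and> e = {x, y}"
  proof
    fix e assume "e \<in> edges (Gk k)"
    then consider (a) j where "e = {Inl j, Inl (j + 1)}" "1 \<le> j" "j + 1 \<le> 2^k - 1"
      | (b) j where "e = {Inr (nu j), Inl j}" "1 \<le> j" "j \<le> 2^k - 1" "nu j < k"
      unfolding Gk_edges by blast
    then show "\<exists>x y. x \<noteq> y \<and> x \<in> verts (Gk k) \<and> y \<in> verts (Gk k) \<and> e = {x, y}"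
    proof cases
      case a then show ?thesis by (intro exI[of _ "Inl j"] exI[of _ "Inl (j+1)"]) auto
    next
      case b then show ?thesis by (intro exI[of _ "Inr (nu j)"] exI[of _ "Inl j"]) auto
    qed
  qed
qed

lemma card_Gk: "card (verts (Gk k)) = 2^k + k - 1"
proof -
  have "card (verts (Gk k)) = card (Inl ` {1 .. 2^k - 1} :: (nat+nat) set) + card (Inr ` {..<k} :: (nat+nat) set)"
    unfolding Gk_verts by (rule card_Un_disjoint) auto
  also have "\<dots> = (2^k - 1) + k" by (simp add: card_image)
  finally show ?thesis by simp
qed




lemma cycle_nbrs:
  assumes c: "is_cycle G xs" and x: "x \<in> set xs"
  shows "\<exists>y z. y \<in> set xs \<and> z \<in> set xs \<and> y \<noteq> z \<and> {x,y} \<in> edges G \<and> {x,z} \<in> edges G"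
proof -
  let ?n = "length xs"
  have n3: "?n \<ge> 3" and d: "distinct xs" and E: "\<And>i. i < ?n \<Longrightarrow> {xs ! i, xs ! ((i + 1) mod ?n)} \<in> edges G"
    using c unfolding is_cycle_def by auto
  obtain p where p: "p < ?n" "x = xs ! p" using x by (metis in_set_conv_nth)
  define a where "a = (if p = ?n - 1 then 0 else p + 1)"
  define b where "b = (if p = 0 then ?n - 1 else p - 1)"
  have sn: "Suc (?n - 1) = ?n" using n3 by simp
  have a: "a < ?n" "(p + 1) mod ?n = a"
  proof -
    show "a < ?n" using p n3 unfolding a_def by auto
    show "(p + 1) mod ?n = a"
    proof (cases "p = ?n - 1")
      case True then show ?thesis unfolding a_def using sn by simp
    next
      case False then show ?thesis unfolding a_def using p by simp
    qed
  qed
  have b: "b < ?n" "(b + 1) mod ?n = p" using p n3 unfolding b_def by auto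
  have ab: "a \<noteq> b" using p n3 unfolding a_def b_def by auto
  have e1: "{x, xs ! a} \<in> edges G" using E[OF p(1)] a p by simp
  have e2: "{xs ! b, x} \<in> edges G" using E[OF b(1)] b p by simp
  show ?thesis
    apply (rule exI[of _ "xs ! a"], rule exI[of _ "xs ! b"])
    using e1 e2 a b ab d by (auto simp: nth_eq_iff_index_eq insert_commute)
qed

lemma cycle_verts: "is_cycle G xs \<Longrightarrow> x \<in> set xs \<Longrightarrow> x \<in> verts G"
  unfolding is_cycle_def by auto

lemma lemmaB:
  assumes c: "is_cycle (Gk k) C" and m: "\<And>i'. Inr i' \<in> set C \<Longrightarrow> i \<le> i'"
  shows "\<exists>j. Inl j \<in> set C \<and> nu j = i"
proof (rule ccontr)
  assume nex: "\<not> ?thesis"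
  define U where "U = {j. Inl j \<in> set C}"
  have Ub: "\<And>j. j \<in> U \<Longrightarrow> 1 \<le> j \<and> j \<le> 2^k - 1"
    using cycle_verts[OF c] unfolding U_def by fastforce
  have finU: "finite U" using Ub by (meson finite_atLeastAtMost finite_subset subsetI atLeastAtMost_iff)
  have "U \<noteq> {}"
  proof -
    obtain x where x: "x \<in> set C" using c unfolding is_cycle_def by (cases C) auto
    show ?thesis
    proof (cases x)
      case (Inl j) then show ?thesis using x U_def by auto
    next
      case (Inr i0)
      obtain y where y: "y \<in> set C" "{x,y} \<in> edges (Gk k)" using cycle_nbrs[OF c x] by blast
      have "\<exists>j. y = Inl j" using y(2) Inr edge_RR by (cases y) auto
      then obtain j where "y = Inl j" by blast
      then show ?thesis using y U_def by auto
    qed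
  qed
  define e where "e = Max U"
  have eU: "e \<in> U" using finU \<open>U \<noteq> {}\<close> e_def by simp
  have emax: "\<And>j. j \<in> U \<Longrightarrow> j \<le> e" using finU e_def by simp
  obtain y z where yz: "y \<in> set C" "z \<in> set C" "y \<noteq> z" "{Inl e, y} \<in> edges (Gk k)" "{Inl e, z} \<in> edges (Gk k)"
    using cycle_nbrs[OF c, of "Inl e"] eU U_def by auto
  have notsucc: "Inl (e+1) \<notin> set C" using emax U_def by fastforce
  have "y = Inl (e - 1) \<and> e \<ge> 2 \<or> y = Inr (nu e)" using nbr_Inl[OF yz(4)] notsucc yz(1) by auto
  moreover have "z = Inl (e - 1) \<and> e \<ge> 2 \<or> z = Inr (nu e)" using nbr_Inl[OF yz(5)] notsucc yz(2) by auto
  ultimately have e1: "e - 1 \<in> U" "e \<ge> 2" and ve: "Inr (nu e) \<in> set C" using yz(1,2,3) U_def by auto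
  have e1': "1 \<le> e" using e1 by simp
  have "i \<le> nu e" using m ve by simp
  moreover have "nu e \<noteq> i" using nex eU U_def by auto
  ultimately have "Suc i \<le> nu e" by simp
  then have de: "2^Suc i dvd e" using nu_dvd_iff[OF e1', of "Suc i"] by (simp only:)
  define s where "s = (LEAST s. \<forall>x. s \<le> x \<and> x \<le> e \<longrightarrow> x \<in> U)"
  have sP: "\<forall>x. s \<le> x \<and> x \<le> e \<longrightarrow> x \<in> U"
    unfolding s_def by (rule LeastI[of _ e]) (use eU in auto)
  have smin: "\<And>t. \<forall>x. t \<le> x \<and> x \<le> e \<longrightarrow> x \<in> U \<Longrightarrow> s \<le> t"
    unfolding s_def by (rule Least_le)
  have "s \<le> e - 1"
  proof (rule smin, intro allI impI)
    fix x assume "e - 1 \<le> x \<and> x \<le> e"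
    then have "x = e - 1 \<or> x = e" by auto
    then show "x \<in> U" using e1 eU by auto
  qed
  then have se: "s < e" using e1 by simp
  have sU: "s \<in> U" using sP se by simp
  then have s1: "1 \<le> s" using Ub by simp
  have notpred: "Inl (s - 1) \<notin> set C"
  proof
    assume "Inl (s - 1) \<in> set C"
    then have "s - 1 \<in> U" using U_def by simp
    then have "\<forall>x. s - 1 \<le> x \<and> x \<le> e \<longrightarrow> x \<in> U"
    proof (intro allI impI)
      fix x assume x: "s - 1 \<le> x \<and> x \<le> e"
      show "x \<in> U"
      proof (cases "x = s - 1")
        case True then show ?thesis using \<open>s - 1 \<in> U\<close> by simp
      next
        case False then have "s \<le> x" using x by linarith
        then show ?thesis using sP x by blast
      qed
    qed
    then have "s \<le> s - 1" using smin by blast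
    then show False using s1 by simp
  qed
  obtain y' z' where yz': "y' \<in> set C" "z' \<in> set C" "y' \<noteq> z'" "{Inl s, y'} \<in> edges (Gk k)" "{Inl s, z'} \<in> edges (Gk k)"
    using cycle_nbrs[OF c, of "Inl s"] sU U_def by auto
  have "y' = Inl (s+1) \<or> y' = Inr (nu s)" using nbr_Inl[OF yz'(4)] notpred yz'(1) by auto
  moreover have "z' = Inl (s+1) \<or> z' = Inr (nu s)" using nbr_Inl[OF yz'(5)] notpred yz'(2) by auto
  ultimately have "Inr (nu s) \<in> set C" using yz' by auto
  then have "i \<le> nu s" using m by simp
  then have ds: "2^i dvd s" using nu_dvd_iff[OF s1] by simp
  have de': "2^i dvd e" using de by (metis dvd_mult_right power_Suc)
  have "s + 2^i \<le> e"
  proof -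
    obtain a where a: "s = 2^i * a" using ds by blast
    obtain b where b: "e = 2^i * b" using de' by blast
    have "a < b" using se a b by simp
    then have "a + 1 \<le> b" by simp
    then have "2^i * (a+1) \<le> 2^i * b" by (rule mult_le_mono2)
    then show ?thesis using a b by (simp add: algebra_simps)
  qed
  then have mU: "e - 2^i \<in> U" using sP by simp
  have pos: "(0::nat) < 2^i" by simp
  have m1: "1 \<le> e - 2^i" using mU Ub by simp
  have "2^i dvd e - 2^i" using de' by (simp add: dvd_diff_nat)
  moreover have "\<not> 2^Suc i dvd e - 2^i"
  proof
    assume "2^Suc i dvd e - 2^i"
    then have "2^Suc i dvd e - (e - 2^i)" using de by (simp add: dvd_diff_nat)
    moreover have "e - (e - 2^i) = 2^i" using \<open>s + 2^i \<le> e\<close> by simp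
    ultimately have "2^Suc i dvd (2::nat)^i" by simp
    moreover have "(2::nat)^i < 2^Suc i" by simp
    ultimately show False using dvd_imp_le[of "(2::nat)^Suc i" "2^i"] by simp
  qed
  ultimately have "nu (e - 2^i) = i" using nu_eq_iff[OF m1] by simp
  then show False using nex mU U_def by auto
qed

lemma indep_sym: "independent_sets G A B \<Longrightarrow> independent_sets G B A"
  unfolding independent_sets_def by (metis Int_commute insert_commute)

lemma lemmaC:
  assumes c1: "is_cycle (Gk k) C1" and c2: "is_cycle (Gk k) C2" and i: "Inr i \<in> set C1"
    and m: "\<And>i'. Inr i' \<in> set C2 \<Longrightarrow> i \<le> i'"
  shows "\<not> independent_sets (Gk k) (set C1) (set C2)"
proof
  assume ind: "independent_sets (Gk k) (set C1) (set C2)"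
  obtain j where j: "Inl j \<in> set C2" "nu j = i" using lemmaB[OF c2 m] by blast
  have "i < k" using cycle_verts[OF c1 i] by simp
  moreover have "1 \<le> j \<and> j \<le> 2^k - 1" using cycle_verts[OF c2 j(1)] by simp
  ultimately have "{Inr i, Inl j} \<in> edges (Gk k)" using j edge_RL by simp
  then show False using ind i j unfolding independent_sets_def by blast
qed

lemma O2_Gk: "O2_free (Gk k)"
  unfolding O2_free_def
proof
  assume "\<exists>xs ys. is_cycle (Gk k) xs \<and> is_cycle (Gk k) ys \<and> independent_sets (Gk k) (set xs) (set ys)"
  then obtain C1 C2 where c1: "is_cycle (Gk k) C1" and c2: "is_cycle (Gk k) C2"
    and ind: "independent_sets (Gk k) (set C1) (set C2)" by blast
  have "\<exists>i. Inr i \<in> set C1 \<union> set C2"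
  proof (rule ccontr)
    assume "\<not> ?thesis"
    then obtain j where j: "Inl j \<in> set C1" "nu j = k" using lemmaB[OF c1, of k] by auto
    have jb: "1 \<le> j" "j \<le> 2^k - 1" using cycle_verts[OF c1 j(1)] by auto
    then show False using nu_less[OF jb] j by simp
  qed
  then obtain i0 where "Inr i0 \<in> set C1 \<union> set C2" by blast
  define i where "i = (LEAST i. Inr i \<in> set C1 \<union> set C2)"
  have iin: "Inr i \<in> set C1 \<union> set C2" unfolding i_def by (rule LeastI) fact
  have im: "\<And>i'. Inr i' \<in> set C1 \<union> set C2 \<Longrightarrow> i \<le> i'" unfolding i_def by (rule Least_le)
  show False
  proof (cases "Inr i \<in> set C1")
    case True then show ?thesis using lemmaC[OF c1 c2 True] im ind by auto
  next
    case False then have i2: "Inr i \<in> set C2" using iin by simp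
    show ?thesis using lemmaC[OF c2 c1 i2] im ind indep_sym by blast
  qed
qed




lemma nbr3: "{Inl j, y} \<in> edges (Gk k) \<Longrightarrow> y \<in> {Inl (j - 1), Inl (j + 1), Inr (nu j)}"
  using nbr_Inl by blast

lemma three_in: assumes "distinct [x1,x2,x3]" "{x1,x2,x3} \<subseteq> {p,q,r}" shows "p \<in> {x1,x2,x3}" "q \<in> {x1,x2,x3}"
  using assms by auto

lemma three_two: "distinct [x,y,z] \<Longrightarrow> {x,y,z} \<subseteq> {p,q} \<Longrightarrow> False"
  by auto

lemma swapE: "\<forall>a\<in>A. \<forall>b\<in>B. {a,b} \<in> X \<Longrightarrow> \<forall>a\<in>B. \<forall>b\<in>A. {a,b} \<in> X"
  by (metis insert_commute)

lemma K33_core: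
  assumes d: "distinct [a1, a2, a3, b1, b2, b3]"
    and E: "\<forall>a\<in>{a1,a2,a3}. \<forall>b\<in>{b1,b2,b3}. {a, b} \<in> edges (Gk k)"
    and j: "a1 = Inl j"
  shows False
proof -
  have Ea1: "\<forall>b\<in>{b1,b2,b3}. {a1,b} \<in> edges (Gk k)" using E by (rule bspec) simp
  have "\<And>b. b \<in> {b1,b2,b3} \<Longrightarrow> {a1, b} \<in> edges (Gk k)" using Ea1 by (rule bspec)
  then have "\<And>b. b \<in> {b1,b2,b3} \<Longrightarrow> b \<in> {Inl (j - 1), Inl (j + 1), Inr (nu j)}"
    unfolding j by (rule nbr3)
  then have sub: "{b1,b2,b3} \<subseteq> {Inl (j - 1), Inl (j + 1), Inr (nu j)}" by (rule subsetI)
  have db: "distinct [b1,b2,b3]" using d by simp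
  have p: "Inl (j - 1) \<in> {b1,b2,b3}" by (rule three_in(1)[OF db sub])
  have q: "Inl (j + 1) \<in> {b1,b2,b3}" by (rule three_in(2)[OF db sub])
  have "\<And>a. a \<in> {a1,a2,a3} \<Longrightarrow> {Inl (j+1), a} \<in> edges (Gk k)" by (rule bspec[OF bspec[OF swapE[OF E] q]])
  then have A1: "{a1,a2,a3} \<subseteq> {Inl (j + 1 - 1), Inl (j + 1 + 1), Inr (nu (j+1))}" using nbr3 by (metis subsetI)
  have "\<And>a. a \<in> {a1,a2,a3} \<Longrightarrow> {Inl (j-1), a} \<in> edges (Gk k)" by (rule bspec[OF bspec[OF swapE[OF E] p]])
  then have A2: "{a1,a2,a3} \<subseteq> {Inl (j - 1 - 1), Inl (j - 1 + 1), Inr (nu (j-1))}" using nbr3 by (metis subsetI)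
  have "{a1,a2,a3} \<subseteq> {Inl j, Inr (nu (j+1))}"
  proof
    fix a assume a: "a \<in> {a1,a2,a3}"
    have x1: "a \<in> {Inl (j + 1 - 1), Inl (j + 1 + 1), Inr (nu (j+1))}" using A1 a by (rule subsetD)
    have x2: "a \<in> {Inl (j - 1 - 1), Inl (j - 1 + 1), Inr (nu (j-1))}" using A2 a by (rule subsetD)
    show "a \<in> {Inl j, Inr (nu (j+1))}"
    proof (cases "a = Inl (j + 1 + 1)")
      case True
      have "j + 1 + 1 \<noteq> j - 1 - 1" "j + 1 + 1 \<noteq> j - 1 + 1" by arith+
      then show ?thesis using x2 True by simp
    next
      case False then show ?thesis using x1 by simp
    qed
  qed
  moreover have "distinct [a1,a2,a3]" using d by simp
  ultimately show False using three_two by metis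
qed

lemma noK33: "\<not> has_K33_subgraph (Gk k)"
  unfolding has_K33_subgraph_def
proof
  assume "\<exists>a1 a2 a3 b1 b2 b3. distinct [a1, a2, a3, b1, b2, b3] \<and> {a1,a2,a3,b1,b2,b3} \<subseteq> verts (Gk k) \<and>
     (\<forall>a\<in>{a1,a2,a3}. \<forall>b\<in>{b1,b2,b3}. {a, b} \<in> edges (Gk k))"
  then obtain a1 a2 a3 b1 b2 b3 where H: "distinct [a1, a2, a3, b1, b2, b3] \<and> {a1,a2,a3,b1,b2,b3} \<subseteq> verts (Gk k) \<and>
     (\<forall>a\<in>{a1,a2,a3}. \<forall>b\<in>{b1,b2,b3}. {a, b} \<in> edges (Gk k))" by (elim exE) (erule that)
  have d: "distinct [a1, a2, a3, b1, b2, b3]" using H by (rule conjunct1)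
  have E: "\<forall>a\<in>{a1,a2,a3}. \<forall>b\<in>{b1,b2,b3}. {a, b} \<in> edges (Gk k)" using H by (elim conjE)
  show False
  proof (cases a1)
    case (Inl j) then show ?thesis using K33_core[OF d E] by blast
  next
    case (Inr i)
    have "{a1, b1} \<in> edges (Gk k)" using E by blast
    then have e1: "{Inr i, b1} \<in> edges (Gk k)" using Inr by simp
    have "\<exists>j. b1 = Inl j"
    proof (cases b1)
      case (Inr i') then show ?thesis using e1 edge_RR[of i i' k] by simp
    qed simp
    then obtain j where j: "b1 = Inl j" by blast
    have d': "distinct [b1, b2, b3, a1, a2, a3]" using d by (simp add: distinct_length_2_or_more) blast
    have E': "\<forall>a\<in>{b1,b2,b3}. \<forall>b\<in>{a1,a2,a3}. {a, b} \<in> edges (Gk k)" using swapE[OF E] .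
    show ?thesis using K33_core[OF d' E' j] .
  qed
qed




definition rel :: "'b graph \<Rightarrow> 'b set \<Rightarrow> 'b \<Rightarrow> 'b \<Rightarrow> bool" where
  "rel T S = (\<lambda>u v. u \<in> S \<and> v \<in> S \<and> {u, v} \<in> edges T)"

lemma connected_in_rel: "connected_in T S \<longleftrightarrow> S \<subseteq> verts T \<and> (\<forall>x\<in>S. \<forall>y\<in>S. (rel T S)\<^sup>*\<^sup>* x y)"
  unfolding connected_in_def rel_def by simp

lemma rel_mono: "S \<subseteq> S' \<Longrightarrow> edges T \<subseteq> edges T' \<Longrightarrow> (rel T S)\<^sup>*\<^sup>* x y \<Longrightarrow> (rel T' S')\<^sup>*\<^sup>* x y"
  by (erule rtranclp_mono[THEN predicate2D, rotated]) (auto simp: rel_def)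

lemma sg_edge: "simple_graph T \<Longrightarrow> {a, b} \<in> edges T \<Longrightarrow> a \<noteq> b \<and> a \<in> verts T \<and> b \<in> verts T"
  unfolding simple_graph_def by (auto simp: doubleton_eq_iff)

definition del :: "'b graph \<Rightarrow> 'b \<Rightarrow> 'b graph" where
  "del T l = (verts T - {l}, {e \<in> edges T. l \<notin> e})"

lemma del_verts[simp]: "verts (del T l) = verts T - {l}" by (simp add: del_def verts_def)
lemma del_edges: "{u, v} \<in> edges (del T l) \<longleftrightarrow> {u, v} \<in> edges T \<and> u \<noteq> l \<and> v \<noteq> l"
  by (auto simp: del_def edges_def)

lemma L1:
  assumes sg: "simple_graph T" and uniq: "\<And>y z. {l, y} \<in> edges T \<Longrightarrow> {l, z} \<in> edges T \<Longrightarrow> y = z"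
    and p: "(rel T S)\<^sup>*\<^sup>* x y" and yl: "y \<noteq> l"
  shows "(x \<noteq> l \<longrightarrow> (rel (del T l) (S - {l}))\<^sup>*\<^sup>* x y) \<and>
         (x = l \<longrightarrow> (\<exists>z. rel T S l z \<and> z \<noteq> l \<and> (rel (del T l) (S - {l}))\<^sup>*\<^sup>* z y))"
  using p
proof (induction rule: converse_rtranclp_induct)
  case base then show ?case using yl by simp
next
  case (step x x')
  have xx': "x \<in> S" "x' \<in> S" "{x, x'} \<in> edges T" using step(1) by (auto simp: rel_def)
  have neq: "x \<noteq> x'" using sg_edge[OF sg xx'(3)] by simp
  show ?case
  proof (cases "x = l")
    case True
    then have "x' \<noteq> l" using neq by simp
    then show ?thesis using step True by auto
  next
    case False
    show ?thesis
    proof (cases "x' = l")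
      case False': False
      have "rel (del T l) (S - {l}) x x'" using xx' False False' by (simp add: rel_def del_edges)
      then show ?thesis using step(3) False False' converse_rtranclp_into_rtranclp by fastforce
    next
      case True
      then obtain z where z: "rel T S l z" "z \<noteq> l" "(rel (del T l) (S - {l}))\<^sup>*\<^sup>* z y" using step(3) by auto
      have "{l, x} \<in> edges T" using xx'(3) True by (simp add: insert_commute)
      moreover have "{l, z} \<in> edges T" using z(1) by (simp add: rel_def)
      ultimately have "x = z" using uniq by blast
      then show ?thesis using z False by simp
    qed
  qed
qed

lemma L2:
  assumes "(rel T S)\<^sup>*\<^sup>* l x" "x \<noteq> l"
  shows "\<exists>z. rel T S l z"
  using assms by (induction rule: converse_rtranclp_induct) auto

lemma conn_del:
  assumes sg: "simple_graph T" and uniq: "\<And>y z. {l, y} \<in> edges T \<Longrightarrow> {l, z} \<in> edges T \<Longrightarrow> y = z"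
    and c: "connected_in T S"
  shows "connected_in (del T l) (S - {l})"
  unfolding connected_in_rel
proof
  show "S - {l} \<subseteq> verts (del T l)" using c by (auto simp: connected_in_rel)
  show "\<forall>x\<in>S - {l}. \<forall>y\<in>S - {l}. (rel (del T l) (S - {l}))\<^sup>*\<^sup>* x y"
  proof (intro ballI)
    fix x y assume x: "x \<in> S - {l}" and y: "y \<in> S - {l}"
    have "(rel T S)\<^sup>*\<^sup>* x y" using c x y by (auto simp: connected_in_rel)
    then show "(rel (del T l) (S - {l}))\<^sup>*\<^sup>* x y" using L1[OF sg uniq, where S=S and x=x and y=y] x y by auto
  qed
qed

lemma cycle_mono: "is_cycle T' xs \<Longrightarrow> verts T' \<subseteq> verts T \<Longrightarrow> edges T' \<subseteq> edges T \<Longrightarrow> is_cycle T xs"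
  unfolding is_cycle_def by blast

lemma del_edges_sub: "edges (del T l) \<subseteq> edges T" by (auto simp: del_def edges_def)

lemma tree_del:
  assumes t: "is_tree T" and uniq: "\<And>y z. {l, y} \<in> edges T \<Longrightarrow> {l, z} \<in> edges T \<Longrightarrow> y = z"
    and ne: "verts T - {l} \<noteq> {}"
  shows "is_tree (del T l)"
proof -
  have sg: "simple_graph T" using t by (simp add: is_tree_def)
  have "simple_graph (del T l)"
    unfolding simple_graph_def
  proof
    show "finite (verts (del T l))" using sg by (simp add: simple_graph_def)
    show "\<forall>e\<in>edges (del T l). \<exists>x y. x \<noteq> y \<and> x \<in> verts (del T l) \<and> y \<in> verts (del T l) \<and> e = {x, y}"
    proof
      fix e assume e: "e \<in> edges (del T l)"
      then have e': "e \<in> edges T" "l \<notin> e" by (auto simp: del_def edges_def)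
      then obtain x y where "x \<noteq> y" "x \<in> verts T" "y \<in> verts T" "e = {x, y}" using sg unfolding simple_graph_def by blast
      then show "\<exists>x y. x \<noteq> y \<and> x \<in> verts (del T l) \<and> y \<in> verts (del T l) \<and> e = {x, y}" using e'(2) by auto
    qed
  qed
  moreover have "connected_in (del T l) (verts (del T l))"
    using conn_del[OF sg uniq, where S="verts T"] t by (simp add: is_tree_def)
  moreover have "\<not> (\<exists>xs. is_cycle (del T l) xs)"
  proof
    assume "\<exists>xs. is_cycle (del T l) xs"
    then obtain xs where "is_cycle (del T l) xs" by blast
    moreover have "verts (del T l) \<subseteq> verts T" by auto
    ultimately have "is_cycle T xs" using cycle_mono[OF _ _ del_edges_sub[of T l]] by blast
    then show False using t by (auto simp: is_tree_def)
  qed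
  ultimately show ?thesis using ne unfolding is_tree_def by simp
qed

lemma finite_verts_tree: "is_tree T \<Longrightarrow> finite (verts T)" by (simp add: is_tree_def simple_graph_def)

lemma long_paths:
  assumes sg: "simple_graph T" and nc: "\<not> (\<exists>xs. is_cycle T xs)" and ne: "verts T \<noteq> {}"
    and deg: "\<And>v. v \<in> verts T \<Longrightarrow> \<exists>y z. y \<noteq> z \<and> {v, y} \<in> edges T \<and> {v, z} \<in> edges T"
  shows "n \<ge> 2 \<Longrightarrow> \<exists>xs. length xs = n \<and> distinct xs \<and> set xs \<subseteq> verts T \<and> (\<forall>i. Suc i < n \<longrightarrow> {xs ! i, xs ! Suc i} \<in> edges T)"
proof (induction n rule: nat_induct_at_least)
  case base
  obtain v where v: "v \<in> verts T" using ne by blast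
  then obtain y where y: "{v, y} \<in> edges T" using deg by blast
  have "v \<noteq> y \<and> v \<in> verts T \<and> y \<in> verts T" using sg_edge[OF sg y] .
  then show ?case using y
    by (intro exI[of _ "[v, y]"]) (auto simp: less_Suc_eq)
next
  case (Suc n)
  then obtain xs where xs: "length xs = n" "distinct xs" "set xs \<subseteq> verts T" "\<forall>i. Suc i < n \<longrightarrow> {xs ! i, xs ! Suc i} \<in> edges T" by blast
  have "0 < length xs" using xs(1) Suc.hyps by simp
  then have x0: "xs ! 0 \<in> verts T" using xs(3) nth_mem by blast
  obtain y z where yz: "y \<noteq> z" "{xs ! 0, y} \<in> edges T" "{xs ! 0, z} \<in> edges T" using deg[OF x0] by blast
  obtain w where w: "w \<noteq> xs ! 1" "{xs ! 0, w} \<in> edges T" using yz by metis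
  have wv: "w \<in> verts T" "w \<noteq> xs ! 0" using sg_edge[OF sg w(2)] by auto
  show ?case
  proof (cases "w \<in> set xs")
    case False
    show ?thesis
    proof (intro exI[of _ "w # xs"] conjI allI impI)
      show "length (w # xs) = Suc n" using xs by simp
      show "distinct (w # xs)" using xs False by simp
      show "set (w # xs) \<subseteq> verts T" using xs wv by simp
      fix i assume i: "Suc i < Suc n"
      show "{(w # xs) ! i, (w # xs) ! Suc i} \<in> edges T"
      proof (cases i)
        case 0 then show ?thesis using w by (simp add: insert_commute)
      next
        case (Suc i') then show ?thesis using xs(4) i by simp
      qed
    qed
  next
    case True
    then obtain i where i: "i < n" "xs ! i = w" by (metis in_set_conv_nth xs(1))
    have "i \<noteq> 0"
    proof
      assume "i = 0" then show False using i wv by simp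
    qed
    moreover have "i \<noteq> 1" using i w by auto
    ultimately have i2: "i \<ge> 2" by simp
    define cs where "cs = take (Suc i) xs"
    have lcs: "length cs = Suc i" using i xs unfolding cs_def by simp
    have "is_cycle T cs"
      unfolding is_cycle_def
    proof (intro conjI allI impI)
      show "3 \<le> length cs" using lcs i2 by simp
      show "distinct cs" using xs unfolding cs_def by simp
      show "set cs \<subseteq> verts T" using xs set_take_subset unfolding cs_def by (metis order_trans)
      fix q assume q: "q < length cs"
      show "{cs ! q, cs ! ((q + 1) mod length cs)} \<in> edges T"
      proof (cases "q = i")
        case True
        then have "(q + 1) mod length cs = 0" using lcs by simp
        then show ?thesis using True w i unfolding cs_def by (simp add: insert_commute)
      next
        case False
        then have "q < i" using q lcs by simp
        then have "(q + 1) mod length cs = Suc q" using lcs by simp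
        then show ?thesis using xs(4) \<open>q < i\<close> i unfolding cs_def by simp
      qed
    qed
    then show ?thesis using nc by blast
  qed
qed

lemma leaf_exists:
  assumes t: "is_tree T" and c2: "card (verts T) \<ge> 2"
  shows "\<exists>l\<in>verts T. \<forall>y z. {l, y} \<in> edges T \<longrightarrow> {l, z} \<in> edges T \<longrightarrow> y = z"
proof (rule ccontr)
  assume "\<not> ?thesis"
  then have deg: "\<And>v. v \<in> verts T \<Longrightarrow> \<exists>y z. y \<noteq> z \<and> {v, y} \<in> edges T \<and> {v, z} \<in> edges T" by blast
  have sg: "simple_graph T" and nc: "\<not> (\<exists>xs. is_cycle T xs)" and ne: "verts T \<noteq> {}" using t by (auto simp: is_tree_def)
  have fin: "finite (verts T)" using finite_verts_tree[OF t] .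
  obtain xs where xs: "length xs = Suc (card (verts T))" "distinct xs" "set xs \<subseteq> verts T"
    using long_paths[OF sg nc ne deg, of "Suc (card (verts T))"] c2 by auto
  have "length xs = card (set xs)" using xs(2) by (simp add: distinct_card)
  also have "\<dots> \<le> card (verts T)" using xs(3) fin by (rule card_mono[rotated])
  finally show False using xs(1) by simp
qed

lemma helly_aux:
  "\<forall>T (S :: nat \<Rightarrow> nat set) I. card (verts T) = n \<longrightarrow> is_tree T \<longrightarrow>
     (\<forall>i\<in>I. S i \<noteq> {} \<and> connected_in T (S i)) \<longrightarrow> (\<forall>i\<in>I. \<forall>j\<in>I. S i \<inter> S j \<noteq> {}) \<longrightarrow>
     (\<exists>t\<in>verts T. \<forall>i\<in>I. t \<in> S i)"
proof (induction n rule: less_induct)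
  case (less n)
  show ?case
  proof (intro allI impI)
    fix T :: "nat graph" and S :: "nat \<Rightarrow> nat set" and I
    assume n: "card (verts T) = n" and t: "is_tree T" and Sc: "\<forall>i\<in>I. S i \<noteq> {} \<and> connected_in T (S i)"
      and Sp: "\<forall>i\<in>I. \<forall>j\<in>I. S i \<inter> S j \<noteq> {}"
    have sg: "simple_graph T" using t by (simp add: is_tree_def)
    have fin: "finite (verts T)" using finite_verts_tree[OF t] .
    have ne: "verts T \<noteq> {}" using t by (simp add: is_tree_def)
    have Ssub: "\<And>i. i \<in> I \<Longrightarrow> S i \<subseteq> verts T" using Sc by (auto simp: connected_in_def)
    show "\<exists>t\<in>verts T. \<forall>i\<in>I. t \<in> S i"
    proof (cases "card (verts T) \<ge> 2")
      case False
      have "card (verts T) > 0" using fin ne by (simp add: card_gt_0_iff)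
      then have "card (verts T) = 1" using False by linarith
      then obtain t0 where t0: "verts T = {t0}" using card_1_singletonE by blast
      have "\<forall>i\<in>I. t0 \<in> S i"
      proof
        fix i assume i: "i \<in> I"
        then have "S i \<subseteq> {t0}" "S i \<noteq> {}" using Ssub Sc t0 by auto
        then show "t0 \<in> S i" by blast
      qed
      then show ?thesis using t0 by simp
    next
      case True
      obtain l where l: "l \<in> verts T" and uniq: "\<And>y z. {l, y} \<in> edges T \<Longrightarrow> {l, z} \<in> edges T \<Longrightarrow> y = z"
        using leaf_exists[OF t True] by blast
      show ?thesis
      proof (cases "\<exists>i\<in>I. S i = {l}")
        case True
        then obtain i0 where i0: "i0 \<in> I" "S i0 = {l}" by blast
        have "\<forall>i\<in>I. l \<in> S i"
        proof
          fix i assume "i \<in> I"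
          then have "S i \<inter> {l} \<noteq> {}" using Sp i0 by metis
          then show "l \<in> S i" by blast
        qed
        then show ?thesis using l by blast
      next
        case False
        let ?T = "del T l"
        let ?S = "\<lambda>i. S i - {l}"
        have ne': "verts T - {l} \<noteq> {}"
        proof
          assume "verts T - {l} = {}"
          then have "verts T \<subseteq> {l}" by blast
          then have "card (verts T) \<le> 1" using card_mono[of "{l}"] by fastforce
          then show False using True by simp
        qed
        have t': "is_tree ?T" using tree_del[OF t uniq ne'] .
        have card': "card (verts ?T) < n" using n fin l True by (simp add: card_Diff_singleton)
        have Sc': "\<forall>i\<in>I. ?S i \<noteq> {} \<and> connected_in ?T (?S i)"
        proof
          fix i assume i: "i \<in> I"
          have n1: "S i \<noteq> {l}" using False i by auto
          have n2: "S i \<noteq> {}" and ci: "connected_in T (S i)" using Sc i by simp_all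
          have "?S i \<noteq> {}" using n1 n2 by blast
          moreover have "connected_in ?T (?S i)" using conn_del[OF sg uniq ci] .
          ultimately show "?S i \<noteq> {} \<and> connected_in ?T (?S i)" by simp
        qed
        have nbr: "\<And>i. i \<in> I \<Longrightarrow> l \<in> S i \<Longrightarrow> \<exists>z. z \<in> S i \<and> z \<noteq> l \<and> {l, z} \<in> edges T"
        proof -
          fix i assume i: "i \<in> I" and li: "l \<in> S i"
          have n1: "S i \<noteq> {l}" using False i by auto
          obtain x where x: "x \<in> S i" "x \<noteq> l" using n1 li by blast
          have ci: "connected_in T (S i)" using Sc i by simp
          have "(rel T (S i))\<^sup>*\<^sup>* l x" using ci li x unfolding connected_in_rel by blast
          then obtain z where "rel T (S i) l z" using L2[OF _ x(2)] by blast
          then have z: "z \<in> S i" "{l, z} \<in> edges T" by (auto simp: rel_def)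
          then have "z \<noteq> l" using sg_edge[OF sg z(2)] by simp
          then show "\<exists>z. z \<in> S i \<and> z \<noteq> l \<and> {l, z} \<in> edges T" using z by blast
        qed
        have Sp': "\<forall>i\<in>I. \<forall>j\<in>I. ?S i \<inter> ?S j \<noteq> {}"
        proof (intro ballI)
          fix i j assume i: "i \<in> I" and j: "j \<in> I"
          show "?S i \<inter> ?S j \<noteq> {}"
          proof (cases "S i \<inter> S j \<subseteq> {l}")
            case False then show ?thesis by blast
          next
            case True
            moreover have "S i \<inter> S j \<noteq> {}" using Sp i j by simp
            ultimately have "l \<in> S i \<and> l \<in> S j" by blast
            then have li: "l \<in> S i" and lj: "l \<in> S j" by blast+
            obtain z where z: "z \<in> S i" "z \<noteq> l" "{l, z} \<in> edges T" using nbr[OF i li] by blast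
            obtain z' where z': "z' \<in> S j" "z' \<noteq> l" "{l, z'} \<in> edges T" using nbr[OF j lj] by blast
            have "z = z'" using uniq z(3) z'(3) .
            then show ?thesis using z z' by blast
          qed
        qed
        have "\<exists>t0\<in>verts ?T. \<forall>i\<in>I. t0 \<in> ?S i"
          by (rule less.IH[OF card', THEN spec[of _ ?T], THEN spec[of _ ?S], THEN spec[of _ I],
            THEN mp, THEN mp, THEN mp, THEN mp, OF refl t' Sc' Sp'])
        then show ?thesis by auto
      qed
    qed
  qed
qed

lemma helly:
  fixes T :: "nat graph" and S :: "nat \<Rightarrow> nat set"
  assumes "is_tree T" "\<forall>i\<in>I. S i \<noteq> {} \<and> connected_in T (S i)" "\<forall>i\<in>I. \<forall>j\<in>I. S i \<inter> S j \<noteq> {}"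
  shows "\<exists>t\<in>verts T. \<forall>i\<in>I. t \<in> S i"
  by (rule helly_aux[of "card (verts T)", THEN spec[of _ T], THEN spec[of _ S], THEN spec[of _ I],
        THEN mp, THEN mp, THEN mp, THEN mp, OF refl assms])




lemma sub_conn:
  assumes td: "tree_decomposition G T B" and X: "connected_in G X"
  shows "connected_in T {t \<in> verts T. B t \<inter> X \<noteq> {}}"
  unfolding connected_in_rel
proof
  let ?St = "{t \<in> verts T. B t \<inter> X \<noteq> {}}"
  show "?St \<subseteq> verts T" by blast
  have Xv: "X \<subseteq> verts G" using X by (simp add: connected_in_def)
  have cov: "\<And>e. e \<in> edges G \<Longrightarrow> \<exists>t\<in>verts T. e \<subseteq> B t" using td by (simp add: tree_decomposition_def)
  have vc: "\<And>v. v \<in> verts G \<Longrightarrow> connected_in T {t \<in> verts T. v \<in> B t}" using td by (simp add: tree_decomposition_def)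
  have hop: "\<And>v t t'. v \<in> X \<Longrightarrow> t \<in> verts T \<Longrightarrow> v \<in> B t \<Longrightarrow> t' \<in> verts T \<Longrightarrow> v \<in> B t' \<Longrightarrow> (rel T ?St)\<^sup>*\<^sup>* t t'"
  proof -
    fix v t t' assume v: "v \<in> X" and t: "t \<in> verts T" "v \<in> B t" and t': "t' \<in> verts T" "v \<in> B t'"
    have "v \<in> verts G" using v Xv by (rule subsetD[rotated])
    then have "connected_in T {t \<in> verts T. v \<in> B t}" by (rule vc)
    then have "\<forall>x\<in>{t \<in> verts T. v \<in> B t}. \<forall>y\<in>{t \<in> verts T. v \<in> B t}. (rel T {t \<in> verts T. v \<in> B t})\<^sup>*\<^sup>* x y"
      unfolding connected_in_rel by (rule conjunct2)
    then have r: "(rel T {t \<in> verts T. v \<in> B t})\<^sup>*\<^sup>* t t'" using t t' by simp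
    have sub: "{t \<in> verts T. v \<in> B t} \<subseteq> ?St" using v by blast
    show "(rel T ?St)\<^sup>*\<^sup>* t t'" by (rule rel_mono[OF sub subset_refl r])
  qed
  show "\<forall>x\<in>?St. \<forall>y\<in>?St. (rel T ?St)\<^sup>*\<^sup>* x y"
  proof (intro ballI)
    fix t1 t2 assume t1: "t1 \<in> ?St" and t2: "t2 \<in> ?St"
    obtain x1 where x1: "x1 \<in> B t1" "x1 \<in> X" using t1 by blast
    obtain x2 where x2: "x2 \<in> B t2" "x2 \<in> X" using t2 by blast
    have "\<forall>x\<in>X. \<forall>y\<in>X. (rel G X)\<^sup>*\<^sup>* x y" using X unfolding connected_in_rel by (rule conjunct2)
    then have p: "(rel G X)\<^sup>*\<^sup>* x1 x2" using x1(2) x2(2) by simp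
    have "\<forall>t\<in>verts T. y \<in> B t \<longrightarrow> (rel T ?St)\<^sup>*\<^sup>* t1 t" if "(rel G X)\<^sup>*\<^sup>* x1 y" for y
      using that
    proof (induction rule: rtranclp_induct)
      case base
      have t1v: "t1 \<in> verts T" using t1 by simp
      show ?case using hop[OF x1(2) t1v x1(1)] by simp
    next
      case (step y y')
      have yy: "y \<in> X" "y' \<in> X" "{y, y'} \<in> edges G" using step(2) by (auto simp: rel_def)
      obtain t' where t': "t' \<in> verts T" "{y, y'} \<subseteq> B t'" using cov[OF yy(3)] by blast
      have a: "(rel T ?St)\<^sup>*\<^sup>* t1 t'" using step(3) t' by simp
      show ?case
      proof (intro ballI impI)
        fix t assume t: "t \<in> verts T" "y' \<in> B t"
        have "y' \<in> B t'" using t'(2) by simp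
        then have "(rel T ?St)\<^sup>*\<^sup>* t' t" using hop[OF yy(2) t'(1) _ t(1) t(2)] by simp
        then show "(rel T ?St)\<^sup>*\<^sup>* t1 t" using a by simp
      qed
    qed
    then have "\<forall>t\<in>verts T. x2 \<in> B t \<longrightarrow> (rel T ?St)\<^sup>*\<^sup>* t1 t" using p by simp
    then show "(rel T ?St)\<^sup>*\<^sup>* t1 t2" using t2 x2 by simp
  qed
qed

lemma tw_lower:
  fixes G :: "'a graph" and T :: "nat graph"
  assumes td: "tree_decomposition G T B" and fin: "finite (verts G)"
    and Xne: "\<And>i. i \<le> k \<Longrightarrow> X i \<noteq> {}"
    and Xc: "\<And>i. i \<le> k \<Longrightarrow> connected_in G (X i)"
    and Xd: "\<And>i j. i \<le> k \<Longrightarrow> j \<le> k \<Longrightarrow> i \<noteq> j \<Longrightarrow> X i \<inter> X j = {}"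
    and Xa: "\<And>i j. i \<le> k \<Longrightarrow> j \<le> k \<Longrightarrow> i \<noteq> j \<Longrightarrow> \<exists>x\<in>X i. \<exists>y\<in>X j. {x, y} \<in> edges G"
  shows "\<exists>t\<in>verts T. k + 1 \<le> card (B t)"
proof -
  define S where "S = (\<lambda>i. {t \<in> verts T. B t \<inter> X i \<noteq> {}})"
  have tr: "is_tree T" using td by (simp add: tree_decomposition_def)
  have Bsub: "\<And>t. t \<in> verts T \<Longrightarrow> B t \<subseteq> verts G" using td by (simp add: tree_decomposition_def)
  have vcov: "\<And>v. v \<in> verts G \<Longrightarrow> \<exists>t\<in>verts T. v \<in> B t" using td by (simp add: tree_decomposition_def)
  have ecov: "\<And>e. e \<in> edges G \<Longrightarrow> \<exists>t\<in>verts T. e \<subseteq> B t" using td by (simp add: tree_decomposition_def)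
  have H1: "\<forall>i\<in>{..k}. S i \<noteq> {} \<and> connected_in T (S i)"
  proof
    fix i assume i: "i \<in> {..k}"
    have ik: "i \<le> k" using i by simp
    obtain x where x: "x \<in> X i" using Xne[OF ik] by blast
    have "X i \<subseteq> verts G" using Xc[OF ik] by (simp add: connected_in_def)
    then have "x \<in> verts G" using x by blast
    then obtain t where "t \<in> verts T" "x \<in> B t" using vcov by blast
    then have "S i \<noteq> {}" using x unfolding S_def by blast
    moreover have "connected_in T (S i)" unfolding S_def by (rule sub_conn[OF td Xc[OF ik]])
    ultimately show "S i \<noteq> {} \<and> connected_in T (S i)" by simp
  qed
  have H2: "\<forall>i\<in>{..k}. \<forall>j\<in>{..k}. S i \<inter> S j \<noteq> {}"
  proof (intro ballI)
    fix i j assume i: "i \<in> {..k}" and j: "j \<in> {..k}"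
    show "S i \<inter> S j \<noteq> {}"
    proof (cases "i = j")
      case True then show ?thesis using H1 i by simp
    next
      case False
      have "\<exists>x\<in>X i. \<exists>y\<in>X j. {x, y} \<in> edges G" using Xa[OF _ _ False] i j by simp
      then obtain x y where xy: "x \<in> X i" "y \<in> X j" "{x, y} \<in> edges G" by blast
      obtain t where t: "t \<in> verts T" "{x, y} \<subseteq> B t" using ecov[OF xy(3)] by blast
      then have "t \<in> S i" "t \<in> S j" unfolding S_def using xy by blast+
      then show ?thesis by blast
    qed
  qed
  obtain t where t: "t \<in> verts T" and tS: "\<forall>i\<in>{..k}. t \<in> S i" using helly[OF tr H1 H2] by blast
  define f where "f = (\<lambda>i. SOME x. x \<in> B t \<inter> X i)"
  have f: "\<And>i. i \<le> k \<Longrightarrow> f i \<in> B t \<inter> X i"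
  proof -
    fix i assume "i \<le> k"
    then have "B t \<inter> X i \<noteq> {}" using tS unfolding S_def by simp
    then have "\<exists>x. x \<in> B t \<inter> X i" by blast
    then show "f i \<in> B t \<inter> X i" unfolding f_def by (rule someI_ex)
  qed
  have inj: "inj_on f {..k}"
  proof (rule inj_onI)
    fix i j assume i: "i \<in> {..k}" and j: "j \<in> {..k}" and e: "f i = f j"
    show "i = j"
    proof (rule ccontr)
      assume ij: "i \<noteq> j"
      have "i \<le> k" "j \<le> k" using i j by simp_all
      then have "X i \<inter> X j = {}" using Xd ij by blast
      moreover have "f i \<in> X i" using f[of i] i by simp
      moreover have "f j \<in> X j" using f[of j] j by simp
      ultimately have "f i \<in> X i" "f i \<in> X j" "X i \<inter> X j = {}" using e by simp_all
      then show False by blast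
    qed
  qed
  have "f ` {..k} \<subseteq> B t"
  proof
    fix x assume "x \<in> f ` {..k}"
    then obtain i where "i \<le> k" "x = f i" by auto
    then show "x \<in> B t" using f[of i] by simp
  qed
  moreover have "finite (B t)" using Bsub[OF t] fin by (rule finite_subset)
  ultimately have "card (f ` {..k}) \<le> card (B t)" by (rule card_mono[rotated])
  moreover have "card (f ` {..k}) = k + 1" using inj by (simp add: card_image)
  ultimately have "k + 1 \<le> card (B t)" by simp
  then show ?thesis using t by blast
qed




definition PG :: "nat \<Rightarrow> nat graph" where "PG N = ({1..N}, {{t, t+1} | t. 1 \<le> t \<and> t+1 \<le> N})"

lemma PG_verts[simp]: "verts (PG N) = {1..N}" by (simp add: PG_def verts_def)

lemma PG_edge: "{a,b} \<in> edges (PG N) \<longleftrightarrow> (1 \<le> a \<and> b = a+1 \<and> b \<le> N) \<or> (1 \<le> b \<and> a = b+1 \<and> a \<le> N)"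
  by (auto simp: PG_def edges_def doubleton_eq_iff)

lemma PG_path:
  assumes S: "S \<subseteq> {1..N}" and cv: "\<And>a b c. a \<in> S \<Longrightarrow> b \<in> S \<Longrightarrow> a \<le> c \<Longrightarrow> c \<le> b \<Longrightarrow> c \<in> S"
    and a: "a \<in> S" and b: "b \<in> S"
  shows "a \<le> c \<Longrightarrow> c \<le> b \<Longrightarrow> (rel (PG N) S)\<^sup>*\<^sup>* a c \<and> (rel (PG N) S)\<^sup>*\<^sup>* c a"
proof (induction c rule: dec_induct)
  case base then show ?case by simp
next
  case (step n)
  have nS: "n \<in> S" using cv[OF a b] step by simp
  have sS: "Suc n \<in> S" using cv[OF a b] step by simp
  have "1 \<le> n" "Suc n \<le> N" using nS sS S by auto
  then have e: "{n, Suc n} \<in> edges (PG N)" "{Suc n, n} \<in> edges (PG N)" using PG_edge by auto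
  have r1: "rel (PG N) S n (Suc n)" using e nS sS by (simp add: rel_def)
  have r2: "rel (PG N) S (Suc n) n" using e nS sS by (simp add: rel_def)
  have IH: "(rel (PG N) S)\<^sup>*\<^sup>* a n \<and> (rel (PG N) S)\<^sup>*\<^sup>* n a" using step by simp
  show ?case using IH r1 r2
    by (meson converse_rtranclp_into_rtranclp rtranclp.rtrancl_into_rtrancl)
qed

lemma PG_conv:
  assumes S: "S \<subseteq> {1..N}" and cv: "\<And>a b c. a \<in> S \<Longrightarrow> b \<in> S \<Longrightarrow> a \<le> c \<Longrightarrow> c \<le> b \<Longrightarrow> c \<in> S"
  shows "connected_in (PG N) S"
  unfolding connected_in_rel
proof
  show "S \<subseteq> verts (PG N)" using S by simp
  show "\<forall>x\<in>S. \<forall>y\<in>S. (rel (PG N) S)\<^sup>*\<^sup>* x y"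
  proof (intro ballI)
    fix x y assume x: "x \<in> S" and y: "y \<in> S"
    show "(rel (PG N) S)\<^sup>*\<^sup>* x y"
    proof (cases "x \<le> y")
      case True then show ?thesis using PG_path[OF S cv x y, where c=y] by simp
    next
      case False then show ?thesis using PG_path[OF S cv y x, where c=x] by simp
    qed
  qed
qed

lemma PG_tree: assumes N: "N \<ge> 1" shows "is_tree (PG N)"
proof -
  have sg: "simple_graph (PG N)"
    unfolding simple_graph_def
  proof
    show "finite (verts (PG N))" by simp
    show "\<forall>e\<in>edges (PG N). \<exists>x y. x \<noteq> y \<and> x \<in> verts (PG N) \<and> y \<in> verts (PG N) \<and> e = {x, y}"
    proof
      fix e assume "e \<in> edges (PG N)"
      then obtain t where t: "e = {t, t+1}" "1 \<le> t" "t+1 \<le> N" by (auto simp: PG_def edges_def)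
      then show "\<exists>x y. x \<noteq> y \<and> x \<in> verts (PG N) \<and> y \<in> verts (PG N) \<and> e = {x, y}"
        by (intro exI[of _ t] exI[of _ "t+1"]) auto
    qed
  qed
  have conn: "connected_in (PG N) (verts (PG N))" by (rule PG_conv) auto
  have nc: "\<not> (\<exists>xs. is_cycle (PG N) xs)"
  proof
    assume "\<exists>xs. is_cycle (PG N) xs"
    then obtain xs where c: "is_cycle (PG N) xs" by blast
    have ne: "set xs \<noteq> {}" using c unfolding is_cycle_def by auto
    define M where "M = Max (set xs)"
    have M: "M \<in> set xs" using ne M_def by simp
    have Mm: "\<And>x. x \<in> set xs \<Longrightarrow> x \<le> M" using M_def by simp
    obtain y z where yz: "y \<in> set xs" "z \<in> set xs" "y \<noteq> z" "{M, y} \<in> edges (PG N)" "{M, z} \<in> edges (PG N)"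
      using cycle_nbrs[OF c M] by blast
    have "y \<le> M" "z \<le> M" using Mm yz by auto
    then have "M = y + 1" "M = z + 1" using yz(4,5) PG_edge by auto
    then show False using yz(3) by simp
  qed
  show ?thesis unfolding is_tree_def using sg conn nc N by auto
qed

definition bagk :: "nat \<Rightarrow> nat \<Rightarrow> (nat + nat) set" where
  "bagk k t = Inr ` {..<k-1} \<union> (if t < 2^(k-1) then {Inl t, Inl (t+1)} else if t = 2^(k-1) then {Inl (2^(k-1)), Inr (k-1)} else {Inl (t-1), Inl t})"

lemma inB_Inr: "Inr i \<in> bagk k t \<longleftrightarrow> i < k - 1 \<or> (t = 2^(k-1) \<and> i = k - 1)"
  by (auto simp: bagk_def)

lemma inB_Inl: "Inl j \<in> bagk k t \<longleftrightarrow> (t < 2^(k-1) \<and> (j = t \<or> j = t+1)) \<or> (t = 2^(k-1) \<and> j = 2^(k-1)) \<or> (t > 2^(k-1) \<and> (j = t-1 \<or> j = t))"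
  by (auto simp: bagk_def)

lemma card2: "card {a, b} \<le> 2" by (cases "a = b") auto

lemma card_bagk: assumes "k \<ge> 1" shows "card (bagk k t) \<le> k + 1"
proof -
  have c1: "card (Inr ` {..<k-1} :: (nat+nat) set) \<le> k - 1" using card_image_le[of "{..<k-1}" Inr] by simp
  have c2: "card (if t < 2^(k-1) then {Inl t, Inl (t+1)} else if t = 2^(k-1) then {Inl (2^(k-1)), Inr (k-1)} else {Inl (t-1), Inl t} :: (nat+nat) set) \<le> 2"
    using card2 by auto
  have "card (bagk k t) \<le> card (Inr ` {..<k-1} :: (nat+nat) set) + card (if t < 2^(k-1) then {Inl t, Inl (t+1)} else if t = 2^(k-1) then {Inl (2^(k-1)), Inr (k-1)} else {Inl (t-1), Inl t} :: (nat+nat) set)"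
    unfolding bagk_def by (rule card_Un_le)
  then show ?thesis using c1 c2 assms by linarith
qed

lemma nu_top: assumes "nu j = k - 1" "1 \<le> j" "j \<le> 2^k - 1" "k \<ge> 1" shows "j = 2^(k-1)"
proof -
  have "2^(k-1) dvd j" using nu_dvd_iff[OF assms(2)] assms(1) by simp
  then obtain c where c: "j = 2^(k-1) * c" by blast
  have pk: "(2::nat)^k = 2 * 2^(k-1)" using assms(4) by (metis Suc_diff_1 less_le_trans power_Suc zero_less_one)
  have "c \<noteq> 0" using c assms(2) by auto
  moreover have "c < 2"
  proof (rule ccontr)
    assume "\<not> c < 2"
    then have "2^(k-1) * 2 \<le> 2^(k-1) * c" by simp
    then have "2^k \<le> j" using c pk by (simp add: mult.commute)
    moreover have "(0::nat) < 2^k" by simp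
    ultimately show False using assms(3) by linarith
  qed
  ultimately have "c = 1" by simp
  then show ?thesis using c by simp
qed

lemma td_Gk:
  assumes k: "k \<ge> 1"
  shows "tree_decomposition (Gk k) (PG (2^k - 1)) (bagk k)"
proof -
  define m where "m = (2::nat)^(k-1)"
  have m1: "m \<ge> 1" unfolding m_def by simp
  have pk: "(2::nat)^k = 2 * m" unfolding m_def using k by (metis Suc_diff_1 less_le_trans power_Suc zero_less_one)
  have N: "2^k - 1 = 2 * m - 1" using pk by simp
  have IL: "\<And>j t. Inl j \<in> bagk k t \<longleftrightarrow> (t < m \<and> (j = t \<or> j = t+1)) \<or> (t = m \<and> j = m) \<or> (t > m \<and> (j = t-1 \<or> j = t))"
    unfolding m_def by (rule inB_Inl)
  have IR: "\<And>i t. Inr i \<in> bagk k t \<longleftrightarrow> i < k - 1 \<or> (t = m \<and> i = k - 1)"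
    unfolding m_def by (rule inB_Inr)
  have tr: "is_tree (PG (2^k - 1))" using PG_tree m1 N by simp
  have sub: "\<forall>t\<in>verts (PG (2^k - 1)). bagk k t \<subseteq> verts (Gk k)"
  proof (intro ballI subsetI)
    fix t x assume t: "t \<in> verts (PG (2^k - 1))" and x: "x \<in> bagk k t"
    have t': "1 \<le> t" "t \<le> 2 * m - 1" using t N by auto
    show "x \<in> verts (Gk k)"
    proof (cases x)
      case (Inl j)
      then have "(t < m \<and> (j = t \<or> j = t+1)) \<or> (t = m \<and> j = m) \<or> (t > m \<and> (j = t-1 \<or> j = t))" using x IL by simp
      then have "1 \<le> j \<and> j \<le> 2 * m - 1" using t' m1 by auto
      then show ?thesis using Inl N by simp
    next
      case (Inr i)
      then have "i < k - 1 \<or> i = k - 1" using x IR by auto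
      then show ?thesis using Inr k by auto
    qed
  qed
  have vcov: "\<forall>v\<in>verts (Gk k). \<exists>t\<in>verts (PG (2^k - 1)). v \<in> bagk k t"
  proof
    fix v assume v: "v \<in> verts (Gk k)"
    show "\<exists>t\<in>verts (PG (2^k - 1)). v \<in> bagk k t"
    proof (cases v)
      case (Inl j)
      then have j: "1 \<le> j" "j \<le> 2 * m - 1" using v N by auto
      have "Inl j \<in> bagk k j" using IL by auto
      then show ?thesis using Inl j N by auto
    next
      case (Inr i)
      then have i: "i < k" using v by simp
      have "Inr i \<in> bagk k m" using IR i by auto
      moreover have "m \<in> verts (PG (2^k - 1))" using N m1 by simp
      ultimately show ?thesis using Inr by blast
    qed
  qed
  have ecov: "\<forall>e\<in>edges (Gk k). \<exists>t\<in>verts (PG (2^k - 1)). e \<subseteq> bagk k t"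
  proof
    fix e assume "e \<in> edges (Gk k)"
    then consider (a) j where "e = {Inl j, Inl (j + 1)}" "1 \<le> j" "j + 1 \<le> 2^k - 1"
      | (b) j where "e = {Inr (nu j), Inl j}" "1 \<le> j" "j \<le> 2^k - 1" "nu j < k"
      unfolding Gk_edges by blast
    then show "\<exists>t\<in>verts (PG (2^k - 1)). e \<subseteq> bagk k t"
    proof cases
      case a
      show ?thesis
      proof (cases "j < m")
        case True
        have "Inl j \<in> bagk k j" "Inl (j+1) \<in> bagk k j" using IL True by auto
        then show ?thesis using a by auto
      next
        case False
        have "Inl j \<in> bagk k (j+1)" "Inl (j+1) \<in> bagk k (j+1)" using IL False by auto
        then show ?thesis using a by auto
      qed
    next
      case b
      show ?thesis
      proof (cases "nu j < k - 1")
        case True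
        have "Inl j \<in> bagk k j" using IL by auto
        moreover have "Inr (nu j) \<in> bagk k j" using IR True by simp
        ultimately show ?thesis using b by auto
      next
        case False
        then have "nu j = k - 1" using b by simp
        then have jm: "j = m" using nu_top b k unfolding m_def by blast
        have "Inl j \<in> bagk k m" using IL jm by auto
        moreover have "Inr (nu j) \<in> bagk k m" using IR \<open>nu j = k - 1\<close> by simp
        moreover have "m \<in> verts (PG (2^k - 1))" using N m1 by simp
        ultimately show ?thesis using b by auto
      qed
    qed
  qed
  have conn: "\<forall>v\<in>verts (Gk k). connected_in (PG (2^k - 1)) {t \<in> verts (PG (2^k - 1)). v \<in> bagk k t}"
  proof
    fix v assume v: "v \<in> verts (Gk k)"
    show "connected_in (PG (2^k - 1)) {t \<in> verts (PG (2^k - 1)). v \<in> bagk k t}"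
    proof (rule PG_conv)
      show "{t \<in> verts (PG (2^k - 1)). v \<in> bagk k t} \<subseteq> {1..2^k - 1}" by auto
      fix a b c assume a: "a \<in> {t \<in> verts (PG (2^k - 1)). v \<in> bagk k t}" and b: "b \<in> {t \<in> verts (PG (2^k - 1)). v \<in> bagk k t}"
        and ac: "a \<le> c" and cb: "c \<le> b"
      have cv: "c \<in> verts (PG (2^k - 1))" using a b ac cb by auto
      have "v \<in> bagk k c"
      proof (cases v)
        case (Inl j)
        have A: "(a < m \<and> (j = a \<or> j = a+1)) \<or> (a = m \<and> j = m) \<or> (a > m \<and> (j = a-1 \<or> j = a))" using a Inl IL by simp
        have B: "(b < m \<and> (j = b \<or> j = b+1)) \<or> (b = m \<and> j = m) \<or> (b > m \<and> (j = b-1 \<or> j = b))" using b Inl IL by simp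
        have "(c < m \<and> (j = c \<or> j = c+1)) \<or> (c = m \<and> j = m) \<or> (c > m \<and> (j = c-1 \<or> j = c))" using A B ac cb by linarith
        then show ?thesis using Inl IL by simp
      next
        case (Inr i)
        have A: "i < k - 1 \<or> (a = m \<and> i = k - 1)" using a Inr IR by simp
        have B: "i < k - 1 \<or> (b = m \<and> i = k - 1)" using b Inr IR by simp
        have "i < k - 1 \<or> (c = m \<and> i = k - 1)" using A B ac cb by auto
        then show ?thesis using Inr IR by simp
      qed
      then show "c \<in> {t \<in> verts (PG (2^k - 1)). v \<in> bagk k t}" using cv by simp
    qed
  qed
  show ?thesis unfolding tree_decomposition_def using tr sub vcov ecov conn by blast
qed




lemma rel_sym_step: "rel G S a b \<Longrightarrow> rel G S b a"
  unfolding rel_def by (simp add: insert_commute)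

lemma rel_sym: "(rel G S)\<^sup>*\<^sup>* x y \<Longrightarrow> (rel G S)\<^sup>*\<^sup>* y x"
proof (induction rule: rtranclp_induct)
  case base then show ?case by simp
next
  case (step y z)
  have "rel G S z y" using step(2) by (rule rel_sym_step)
  then show ?case using step(3) by (rule converse_rtranclp_into_rtranclp)
qed

lemma center_conn:
  assumes "c \<in> S" "S \<subseteq> verts G" "\<And>x. x \<in> S \<Longrightarrow> (rel G S)\<^sup>*\<^sup>* c x"
  shows "connected_in G S"
  unfolding connected_in_rel
proof (intro conjI ballI)
  show "S \<subseteq> verts G" by fact
  fix x y assume x: "x \<in> S" and y: "y \<in> S"
  have "(rel G S)\<^sup>*\<^sup>* x c" using rel_sym[OF assms(3)[OF x]] .
  moreover have "(rel G S)\<^sup>*\<^sup>* c y" using assms(3)[OF y] .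
  ultimately show "(rel G S)\<^sup>*\<^sup>* x y" by simp
qed

lemma Gk_interval:
  assumes S: "\<And>x. a \<le> x \<Longrightarrow> x \<le> b \<Longrightarrow> Inl x \<in> S" and a1: "1 \<le> a" and bk: "b \<le> 2^k - 1"
  shows "a \<le> x \<Longrightarrow> x \<le> b \<Longrightarrow> (rel (Gk k) S)\<^sup>*\<^sup>* (Inl a) (Inl x)"
proof (induction x rule: dec_induct)
  case base then show ?case by simp
next
  case (step n)
  have "{Inl n, Inl (Suc n)} \<in> edges (Gk k)" using edge_LL step a1 bk by auto
  moreover have "Inl n \<in> S" "Inl (Suc n) \<in> S" using S step by auto
  ultimately have r: "rel (Gk k) S (Inl n) (Inl (Suc n))" by (simp add: rel_def)
  have IH: "(rel (Gk k) S)\<^sup>*\<^sup>* (Inl a) (Inl n)" using step by simp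
  show ?case by (rule rtranclp.rtrancl_into_rtrancl[OF IH r])
qed

lemma nu_pow: "nu (2^i) = i"
  using nu_eq_iff[of "2^i" i] by simp

lemma nu_sum: assumes "i + 2 \<le> j" shows "nu (2^(j-1) + 2^i) = i"
proof -
  have "(0::nat) < 2^i" by simp
  then have pos: "1 \<le> (2::nat)^(j-1) + 2^i" by linarith
  have d1: "(2::nat)^i dvd 2^(j-1)" using assms by (simp add: le_imp_power_dvd)
  have "Suc i \<le> j - 1" using assms by simp
  then have d2: "(2::nat)^Suc i dvd 2^(j-1)" by (rule le_imp_power_dvd)
  have "2^i dvd (2::nat)^(j-1) + 2^i" using d1 by simp
  moreover have "\<not> 2^Suc i dvd (2::nat)^(j-1) + 2^i"
  proof
    assume "2^Suc i dvd (2::nat)^(j-1) + 2^i"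
    then have "2^Suc i dvd (2::nat)^i" using d2 by (simp add: dvd_add_right_iff)
    moreover have "(2::nat)^i < 2^Suc i" by simp
    ultimately show False using dvd_imp_le[of "(2::nat)^Suc i" "2^i"] by simp
  qed
  ultimately show ?thesis using nu_eq_iff[OF pos] by simp
qed

lemma pow_pred: "j \<ge> 1 \<Longrightarrow> (2::nat)^j = 2 * 2^(j-1)"
  by (metis Suc_diff_1 less_le_trans power_Suc zero_less_one)

lemma family_big:
  assumes k: "k \<ge> 2"
  shows "\<exists>X. (\<forall>i\<le>k. X i \<noteq> {}) \<and> (\<forall>i\<le>k. connected_in (Gk k) (X i)) \<and>
     (\<forall>i j. i \<le> k \<longrightarrow> j \<le> k \<longrightarrow> i \<noteq> j \<longrightarrow> X i \<inter> X j = {}) \<and>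
     (\<forall>i j. i \<le> k \<longrightarrow> j \<le> k \<longrightarrow> i \<noteq> j \<longrightarrow> (\<exists>x\<in>X i. \<exists>y\<in>X j. {x, y} \<in> edges (Gk k)))"
proof -
  define lo where "lo = (\<lambda>i::nat. if i = 0 then 0 else (2::nat)^(i-1))"
  define hi where "hi = (\<lambda>i::nat. if i < k then (2::nat)^i else 2^k - 1)"
  define X where "X = (\<lambda>i. (if i < k then {Inr i} else {}) \<union> Inl ` {j. lo i < j \<and> j \<le> hi i})"
  have pk: "(2::nat)^k = 2 * 2^(k-1)" using k pow_pred by simp
  have "(2::nat)^1 \<le> 2^(k-1)" using k by (intro power_increasing) auto
  then have pk1: "(2::nat) \<le> 2^(k-1)" by simp
  have XL: "\<And>i j. Inl j \<in> X i \<longleftrightarrow> lo i < j \<and> j \<le> hi i" unfolding X_def by auto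
  have XR: "\<And>i i'. Inr i' \<in> X i \<longleftrightarrow> i' = i \<and> i < k" unfolding X_def by auto
  have F1: "\<And>i. i \<le> k \<Longrightarrow> lo i + 1 \<le> hi i"
  proof -
    fix i assume i: "i \<le> k"
    show "lo i + 1 \<le> hi i"
    proof (cases "i = 0")
      case True then show ?thesis using k unfolding lo_def hi_def by simp
    next
      case False
      show ?thesis
      proof (cases "i < k")
        case True
        have "(2::nat)^i = 2 * 2^(i-1)" using False pow_pred by simp
        moreover have "(1::nat) \<le> 2^(i-1)" by simp
        ultimately show ?thesis using True False unfolding lo_def hi_def by simp
      next
        case False': False
        then have "i = k" using i by simp
        then show ?thesis using pk pk1 False unfolding lo_def hi_def by simp
      qed
    qed
  qed
  have F2: "\<And>i. hi i \<le> 2^k - 1"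
  proof -
    fix i show "hi i \<le> 2^k - 1"
    proof (cases "i < k")
      case True
      then have "(2::nat)^i < 2^k" by (simp add: power_strict_increasing)
      then have "(2::nat)^i \<le> 2^k - 1" by linarith
      then show ?thesis using True unfolding hi_def by simp
    qed (simp add: hi_def)
  qed
  have F3: "\<And>i j. i < j \<Longrightarrow> hi i \<le> lo j"
  proof -
    fix i j :: nat assume ij: "i < j"
    have "hi i \<le> 2^i"
    proof (cases "i < k")
      case False
      then have "(2::nat)^k \<le> 2^i" by (simp add: power_increasing)
      then have "(2::nat)^k - 1 \<le> 2^i" by linarith
      then show ?thesis using False unfolding hi_def by simp
    qed (simp add: hi_def)
    also have "(2::nat)^i \<le> 2^(j-1)" using ij by (simp add: power_increasing)
    finally show "hi i \<le> lo j" using ij unfolding lo_def by simp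
  qed
  have lo1: "\<And>i. lo i + 1 \<ge> 1" by simp
  have Xne: "\<forall>i\<le>k. X i \<noteq> {}"
  proof (intro allI impI)
    fix i assume "i \<le> k"
    then have "Inl (lo i + 1) \<in> X i" using F1 XL by simp
    then show "X i \<noteq> {}" by blast
  qed
  have Xc: "\<forall>i\<le>k. connected_in (Gk k) (X i)"
  proof (intro allI impI)
    fix i assume i: "i \<le> k"
    have Sint: "\<And>x. lo i + 1 \<le> x \<Longrightarrow> x \<le> hi i \<Longrightarrow> Inl x \<in> X i" using XL by simp
    have path: "\<And>x. lo i + 1 \<le> x \<Longrightarrow> x \<le> hi i \<Longrightarrow> (rel (Gk k) (X i))\<^sup>*\<^sup>* (Inl (lo i + 1)) (Inl x)"
      using Gk_interval[OF Sint _ F2] by simp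
    show "connected_in (Gk k) (X i)"
    proof (rule center_conn)
      show "Inl (lo i + 1) \<in> X i" using F1[OF i] XL by simp
      show "X i \<subseteq> verts (Gk k)"
      proof
        fix x assume x: "x \<in> X i"
        show "x \<in> verts (Gk k)"
        proof (cases x)
          case (Inl j) then show ?thesis using x XL F2[of i] by (auto simp: less_eq_Suc_le)
        next
          case (Inr i') then show ?thesis using x XR by simp
        qed
      qed
      fix x assume x: "x \<in> X i"
      show "(rel (Gk k) (X i))\<^sup>*\<^sup>* (Inl (lo i + 1)) x"
      proof (cases x)
        case (Inl j) then show ?thesis using x XL path by (simp add: less_eq_Suc_le)
      next
        case (Inr i')
        then have ii: "i' = i" "i < k" using x XR by auto
        then have hi: "hi i = 2^i" unfolding hi_def by simp
        have p1: "(rel (Gk k) (X i))\<^sup>*\<^sup>* (Inl (lo i + 1)) (Inl (2^i))" using path F1[OF i] hi by simp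
        have "(2::nat)^i \<le> 2^k - 1" using F2[of i] hi by simp
        then have "{Inl (2^i), Inr i} \<in> edges (Gk k)" using edge_LR ii nu_pow by simp
        moreover have "Inl (2^i) \<in> X i" "Inr i \<in> X i" using XL XR F1[OF i] hi ii by auto
        ultimately have "rel (Gk k) (X i) (Inl (2^i)) (Inr i)" by (simp add: rel_def)
        then show ?thesis using p1 Inr ii by (meson rtranclp.rtrancl_into_rtrancl)
      qed
    qed
  qed
  have Xd_lt: "\<And>i j. i < j \<Longrightarrow> X i \<inter> X j = {}"
  proof -
    fix i j :: nat assume ij: "i < j"
    show "X i \<inter> X j = {}"
    proof (rule ccontr)
      assume "X i \<inter> X j \<noteq> {}"
      then obtain x where x: "x \<in> X i" "x \<in> X j" by blast
      show False
      proof (cases x)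
        case (Inl y)
        then have "y \<le> hi i" "lo j < y" using x XL by auto
        then show False using F3[OF ij] by simp
      next
        case (Inr y)
        then have "y = i" "y = j" using x XR by auto
        then show False using ij by simp
      qed
    qed
  qed
  have Xd: "\<forall>i j. i \<le> k \<longrightarrow> j \<le> k \<longrightarrow> i \<noteq> j \<longrightarrow> X i \<inter> X j = {}"
  proof (intro allI impI)
    fix i j :: nat assume "i \<noteq> j"
    then consider "i < j" | "j < i" by arith
    then show "X i \<inter> X j = {}"
    proof cases
      case 1 then show ?thesis by (rule Xd_lt)
    next
      case 2 then show ?thesis using Xd_lt[of j i] by (simp add: Int_commute)
    qed
  qed
  have Xa_lt: "\<And>i j. i < j \<Longrightarrow> j \<le> k \<Longrightarrow> \<exists>x\<in>X i. \<exists>y\<in>X j. {x, y} \<in> edges (Gk k)"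
  proof -
    fix i j :: nat assume ij: "i < j" and jk: "j \<le> k"
    have ik: "i < k" using ij jk by simp
    have hii: "hi i = 2^i" using ik unfolding hi_def by simp
    show "\<exists>x\<in>X i. \<exists>y\<in>X j. {x, y} \<in> edges (Gk k)"
    proof (cases "j = i + 1")
      case True
      have loj: "lo j = 2^i" using True unfolding lo_def by simp
      have "lo i < 2^i"
      proof (cases "i = 0")
        case False
        then have "(2::nat)^i = 2 * 2^(i-1)" using pow_pred by simp
        moreover have "(1::nat) \<le> 2^(i-1)" by simp
        ultimately show ?thesis using False unfolding lo_def by simp
      qed (simp add: lo_def)
      then have x: "Inl (2^i) \<in> X i" using XL hii by simp
      have y: "Inl (2^i + 1) \<in> X j" using XL F1[OF jk] loj by simp
      have "2^i + 1 \<le> (2::nat)^k - 1" using F1[OF jk] F2[of j] loj by simp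
      then have "{Inl (2^i), Inl (2^i + 1)} \<in> edges (Gk k)" using edge_LL by simp
      then show ?thesis using x y by blast
    next
      case False
      then have ij2: "i + 2 \<le> j" using ij by simp
      have x: "Inr i \<in> X i" using XR ik by simp
      have lt: "(2::nat)^i < 2^(j-1)" using ij2 by (simp add: power_strict_increasing)
      have pj: "(2::nat)^j = 2 * 2^(j-1)" using ij2 pow_pred by simp
      have loj: "lo j = 2^(j-1)" using ij2 unfolding lo_def by simp
      have "2^(j-1) + 2^i \<le> hi j"
      proof (cases "j < k")
        case True then show ?thesis using lt pj unfolding hi_def by simp
      next
        case False then have jk': "j = k" using jk by simp
        then have "(2::nat)^i < 2^(k-1)" using lt by simp
        then have "(2::nat)^(k-1) + 2^i \<le> 2^k - 1" using pk by linarith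
        then show ?thesis using jk' unfolding hi_def by simp
      qed
      then have y: "Inl (2^(j-1) + 2^i) \<in> X j" using XL loj by simp
      have "2^(j-1) + 2^i \<le> (2::nat)^k - 1" using \<open>2^(j-1) + 2^i \<le> hi j\<close> F2[of j] by simp
      moreover have "(1::nat) \<le> 2^(j-1) + 2^i"
      proof -
        have "(0::nat) < 2^i" by simp
        then show ?thesis by linarith
      qed
      ultimately have "{Inr i, Inl (2^(j-1) + 2^i)} \<in> edges (Gk k)" using edge_RL ik nu_sum[OF ij2] by simp
      then show ?thesis using x y by blast
    qed
  qed
  have Xa: "\<forall>i j. i \<le> k \<longrightarrow> j \<le> k \<longrightarrow> i \<noteq> j \<longrightarrow> (\<exists>x\<in>X i. \<exists>y\<in>X j. {x, y} \<in> edges (Gk k))"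
  proof (intro allI impI)
    fix i j :: nat assume ik: "i \<le> k" and jk: "j \<le> k" and ij: "i \<noteq> j"
    show "\<exists>x\<in>X i. \<exists>y\<in>X j. {x, y} \<in> edges (Gk k)"
    proof (cases "i < j")
      case True then show ?thesis using Xa_lt jk by blast
    next
      case False then have "j < i" using ij by simp
      then obtain y x where "y \<in> X j" "x \<in> X i" "{y, x} \<in> edges (Gk k)" using Xa_lt ik by blast
      then show ?thesis by (metis insert_commute)
    qed
  qed
  show ?thesis by (rule exI[of _ X]) (intro conjI; fact)
qed




lemma family:
  assumes k: "k \<ge> 1"
  shows "\<exists>X. (\<forall>i\<le>k. X i \<noteq> {}) \<and> (\<forall>i\<le>k. connected_in (Gk k) (X i)) \<and>
     (\<forall>i j. i \<le> k \<longrightarrow> j \<le> k \<longrightarrow> i \<noteq> j \<longrightarrow> X i \<inter> X j = {}) \<and>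
     (\<forall>i j. i \<le> k \<longrightarrow> j \<le> k \<longrightarrow> i \<noteq> j \<longrightarrow> (\<exists>x\<in>X i. \<exists>y\<in>X j. {x, y} \<in> edges (Gk k)))"
proof (cases "k \<ge> 2")
  case True then show ?thesis by (rule family_big)
next
  case False
  then have k1: "k = 1" using k by simp
  define X where "X = (\<lambda>i::nat. if i = 0 then {Inr 0} else {Inl 1 :: nat + nat})"
  have single: "\<And>v. v \<in> verts (Gk 1) \<Longrightarrow> connected_in (Gk 1) {v}"
    by (rule center_conn) auto
  have e: "{Inr 0, Inl 1} \<in> edges (Gk 1)"
  proof -
    have "nu 1 = 0" using nu_eq_iff[of 1 0] by simp
    then show ?thesis using edge_RL by simp
  qed
  have A: "\<forall>i\<le>1. X i \<noteq> {}" unfolding X_def by simp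
  have B: "\<forall>i\<le>1. connected_in (Gk 1) (X i)"
  proof (intro allI impI)
    fix i :: nat assume "i \<le> 1"
    show "connected_in (Gk 1) (X i)"
    proof (cases "i = 0")
      case True then show ?thesis unfolding X_def using single[of "Inr 0"] by simp
    next
      case False then show ?thesis unfolding X_def using single[of "Inl 1"] by simp
    qed
  qed
  have C: "\<forall>i j. i \<le> 1 \<longrightarrow> j \<le> 1 \<longrightarrow> i \<noteq> j \<longrightarrow> X i \<inter> X j = {}"
    unfolding X_def by auto
  have D: "\<forall>i j. i \<le> 1 \<longrightarrow> j \<le> 1 \<longrightarrow> i \<noteq> j \<longrightarrow> (\<exists>x\<in>X i. \<exists>y\<in>X j. {x, y} \<in> edges (Gk 1))"
  proof (intro allI impI)
    fix i j :: nat assume "i \<le> 1" "j \<le> 1" "i \<noteq> j"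
    then have "(i = 0 \<and> j = 1) \<or> (i = 1 \<and> j = 0)" by arith
    then show "\<exists>x\<in>X i. \<exists>y\<in>X j. {x, y} \<in> edges (Gk 1)"
    proof
      assume "i = 0 \<and> j = 1" then show ?thesis unfolding X_def using e by simp
    next
      assume "i = 1 \<and> j = 0" then show ?thesis unfolding X_def using e by (simp add: insert_commute)
    qed
  qed
  show ?thesis unfolding k1 by (rule exI[of _ X]) (intro conjI; fact)
qed

lemma tw_Gk: assumes k: "k \<ge> 1" shows "treewidth (Gk k) = k"
  unfolding treewidth_def
proof (rule Least_equality)
  have "tree_decomposition (Gk k) (PG (2^k - 1)) (bagk k) \<and> (\<forall>t\<in>verts (PG (2^k - 1)). card (bagk k t) \<le> k + 1)"
    using td_Gk[OF k] card_bagk[OF k] by simp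
  then show "\<exists>T B. tree_decomposition (Gk k) T B \<and> (\<forall>t\<in>verts T. card (B t) \<le> k + 1)" by blast
next
  fix w assume "\<exists>T B. tree_decomposition (Gk k) T B \<and> (\<forall>t\<in>verts T. card (B t) \<le> w + 1)"
  then obtain T B where td: "tree_decomposition (Gk k) T B" and cb: "\<forall>t\<in>verts T. card (B t) \<le> w + 1" by blast
  obtain X where X1: "\<forall>i\<le>k. X i \<noteq> {}" and X2: "\<forall>i\<le>k. connected_in (Gk k) (X i)"
    and X3: "\<forall>i j. i \<le> k \<longrightarrow> j \<le> k \<longrightarrow> i \<noteq> j \<longrightarrow> X i \<inter> X j = {}"
    and X4: "\<forall>i j. i \<le> k \<longrightarrow> j \<le> k \<longrightarrow> i \<noteq> j \<longrightarrow> (\<exists>x\<in>X i. \<exists>y\<in>X j. {x, y} \<in> edges (Gk k))"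
    using family[OF k] by (elim exE conjE)
  have fin: "finite (verts (Gk k))" using simple_Gk by (simp add: simple_graph_def)
  obtain t where t: "t \<in> verts T" "k + 1 \<le> card (B t)"
    using tw_lower[OF td fin, of k X] X1 X2 X3 X4 by blast
  then show "k \<le> w" using cb by fastforce
qed

theorem mainTheorem3:
  fixes k :: nat
  assumes "k \<ge> 1"
  shows "simple_graph (Gk k) \<and> card (verts (Gk k)) = 2^k + k - 1 \<and> O2_free (Gk k) \<and>
         \<not> has_K33_subgraph (Gk k) \<and> treewidth (Gk k) = k"
  using simple_Gk card_Gk O2_Gk noK33 tw_Gk[OF assms] by simp


end
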